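(* Let $\Omega$ be a finite-dimensional real Euclidean space and $f_1,\dots,f_N \colon \Omega\to\mathbb{R}$ continuous convex functions such that $E = \frac1N\sum_{j=1}^N f_j$ is coercive, and suppose each $f_j$ is $\mu$-strongly convex for some $\mu>0$. Let $\theta^*$ be the minimizer of $E$. Run DualFL (described in the context) with hyperparameters $\rho = 0$ and $\nu\in(0,\mu]$, and suppose that for some $\gamma>0$ the local iterates satisfy, for all $1\le j\le N$ and $n\ge 0$, \[ \Gamma^{n,j}(\theta_j^{(n+1)}) \leq \frac{1}{N\nu(n+1)^{4+\gamma}}. \] Then the sequence $\{\theta^{(n)}\}$ generated by DualFL converges to $\theta^*$, and moreover $\|\theta^{(n)} - \theta^*\|^2 \lesssim \frac{1}{n^2}$ for $n\ge 0$ (for $n \geq 1$).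
   Context: $h$ is $\mu$-strongly convex if $h-\frac{\mu}{2}\|\cdot\|^2$ is convex; $h^*(p)=\sup_x\{\langle p,x\rangle - h(x)\}$ is the Legendre--Fenchel conjugate. $A\lesssim B$ means $A\le CB$ for a constant $C>0$ independent of the iteration counter $n$. DualFL with hyperparameters $\rho\ge 0$, $\nu>0$: set $\theta^{(0)}=\theta_j^{(0)}=0\in\Omega$ ($1\le j\le N$), $\zeta_j^{(0)}=\zeta_j^{(-1)}=0\in\Omega$, $t_0=1$. For $n=0,1,2,\dots$: each client $j$ computes (by some local iterative solver) an approximate minimizer $\theta_j^{(n+1)}\in\Omega$ of $E^{n,j}(\theta) = f_j(\theta) - \nu\langle\zeta_j^{(n)},\theta\rangle$; then $\theta^{(n+1)}=\frac1N\sum_{j=1}^N\theta_j^{(n+1)}$; then with $t_{n+1} = \frac{1-\rho t_n^2 + \sqrt{(1-\rho t_n^2)^2+4t_n^2}}{2}$, $\beta_n = \frac{t_n-1}{t_{n+1}}\cdot\frac{1-t_{n+1}\rho}{1-\rho}$, each client sets $\zeta_j^{(n+1)} = (1+\beta_n)(\zeta_j^{(n)}+\theta^{(n+1)}-\theta_j^{(n+1)}) - \beta_n(\zeta_j^{(n-1)}+\theta^{(n)}-\theta_j^{(n)})$. Primal-dual gap: with $g_j(\theta)=f_j(\theta)-\frac{\nu}{2}\|\theta\|^2$ and $E^{n,j}_{\mathrm d}(\xi) = g_j^*(\xi)+\frac{1}{2\nu}\|\xi-\nu\zeta_j^{(n)}\|^2$, define $\Gamma^{n,j}(\theta) = E^{n,j}(\theta)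 + E^{n,j}_{\mathrm d}(\nu(\zeta_j^{(n)}-\theta))$. *)

theory Defs
  imports "HOL-Analysis.Analysis"
begin

definition strongly_convex :: "real \<Rightarrow> ('a::real_inner \<Rightarrow> real) \<Rightarrow> bool" where
  "strongly_convex \<mu> h \<longleftrightarrow> convex_on UNIV (\<lambda>x. h x - \<mu> / 2 * (norm x)\<^sup>2)"

definition fenchel_conj :: "('a::real_inner \<Rightarrow> real) \<Rightarrow> 'a \<Rightarrow> ereal" where
  "fenchel_conj h p = (SUP x. ereal (inner p x - h x))"

primrec dualfl_t :: "real \<Rightarrow> nat \<Rightarrow> real" where
  "dualfl_t \<rho> 0 = 1"
| "dualfl_t \<rho> (Suc n) =
     (1 - \<rho> * (dualfl_t \<rho> n)\<^sup>2 + sqrt ((1 - \<rho> * (dualfl_t \<rho> n)\<^sup>2)\<^sup>2 + 4 * (dualfl_t \<rho> n)\<^sup>2)) / 2"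

definition dualfl_beta :: "real \<Rightarrow> nat \<Rightarrow> real" where
  "dualfl_beta \<rho> n = (dualfl_t \<rho> n - 1) / dualfl_t \<rho> (Suc n)
      * ((1 - dualfl_t \<rho> (Suc n) * \<rho>) / (1 - \<rho>))"

definition local_energy :: "('a::real_inner \<Rightarrow> real) \<Rightarrow> real \<Rightarrow> 'a \<Rightarrow> 'a \<Rightarrow> real" where
  "local_energy fj \<nu> z \<theta> = fj \<theta> - \<nu> * inner z \<theta>"

definition dual_energy :: "('a::real_inner \<Rightarrow> real) \<Rightarrow> real \<Rightarrow> 'a \<Rightarrow> 'a \<Rightarrow> ereal" where
  "dual_energy fj \<nu> z \<xi> =
     fenchel_conj (\<lambda>x. fj x - \<nu> / 2 * (norm x)\<^sup>2) \<xi>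
     + ereal (1 / (2 * \<nu>) * (norm (\<xi> - \<nu> *\<^sub>R z))\<^sup>2)"

definition pd_gap :: "('a::real_inner \<Rightarrow> real) \<Rightarrow> real \<Rightarrow> 'a \<Rightarrow> 'a \<Rightarrow> ereal" where
  "pd_gap fj \<nu> z \<theta> = ereal (local_energy fj \<nu> z \<theta>) + dual_energy fj \<nu> z (\<nu> *\<^sub>R (z - \<theta>))"

end

theory Submission
  imports Defs
begin

definition subgr :: "('a::real_inner \<Rightarrow> real) \<Rightarrow> 'a \<Rightarrow> 'a \<Rightarrow> bool" where
  "subgr F x s \<longleftrightarrow> (\<forall>y. F x + inner s (y - x) \<le> F y)"

lemma le_of_eps:
  fixes X Y Z :: real
  assumes "Z \<ge> 0" "\<And>t. 0 < t \<Longrightarrow> t < 1 \<Longrightarrow> X \<le> Y + t * Z"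
  shows "X \<le> Y"
proof (rule ccontr)
  assume "\<not> X \<le> Y"
  then have XY: "X > Y" by simp
  define t where "t = min (1/2) ((X - Y) / (2 * (Z + 1)))"
  have t0: "0 < t" "t < 1" using XY assms(1) by (auto simp: t_def)
  have "t * Z < X - Y"
  proof -
    have "t * Z \<le> ((X - Y) / (2 * (Z + 1))) * Z"
      using assms(1) by (intro mult_right_mono) (auto simp: t_def)
    also have "\<dots> < X - Y" using XY assms(1) by (simp add: field_simps) (smt (verit) mult_right_mono)
    finally show ?thesis .
  qed
  with assms(2)[OF t0] show False by simp
qed

lemma subgr_sum2:
  fixes f g :: "'a::euclidean_space \<Rightarrow> real"
  assumes cf: "convex_on UNIV f" and cg: "convex_on UNIV g"
    and sg: "subgr (\<lambda>y. f y + g y) x s"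
  shows "\<exists>a b. subgr f x a \<and> subgr g x b \<and> a + b = s"
proof -
  define F where "F y = f y - f x - inner s (y - x)" for y
  define G where "G y = g x - g y" for y
  define A :: "('a \<times> real) set" where "A = {(y, r). F y < r}"
  define B :: "('a \<times> real) set" where "B = {(y, r). r \<le> G y}"
  have FG: "G y \<le> F y" for y
    using sg unfolding subgr_def F_def G_def by (simp add: algebra_simps)
  have convA: "convex A"
  proof (rule convexI)
    fix p q :: "'a \<times> real" and u v :: real
    assume p: "p \<in> A" and q: "q \<in> A" and u0: "0 \<le> u" and v0: "0 \<le> v" and uv1: "u + v = 1"
    have uv: "0 \<le> u \<and> 0 \<le> v \<and> u + v = 1" using u0 v0 uv1 by simp
    obtain y1 r1 where p': "p = (y1, r1)" by force
    obtain y2 r2 where q': "q = (y2, r2)" by force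
    have h1: "F y1 < r1" "F y2 < r2" using p q p' q' by (auto simp: A_def)
    have "f (u *\<^sub>R y1 + v *\<^sub>R y2) \<le> u * f y1 + v * f y2"
      using convex_onD[OF cf, of v y1 y2] uv by (subgoal_tac "u = 1 - v") auto
    moreover have "inner s (u *\<^sub>R y1 + v *\<^sub>R y2 - x) = u * inner s (y1 - x) + v * inner s (y2 - x)"
    proof -
      have "u *\<^sub>R y1 + v *\<^sub>R y2 - x = u *\<^sub>R (y1 - x) + v *\<^sub>R (y2 - x)"
        using uv by (simp add: algebra_simps flip: scaleR_add_left)
      then show ?thesis by (simp add: inner_add_right)
    qed
    moreover have "f x = u * f x + v * f x" using uv by (simp flip: distrib_right)
    ultimately have "F (u *\<^sub>R y1 + v *\<^sub>R y2) \<le> u * F y1 + v * F y2"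
      unfolding F_def by (simp add: algebra_simps)
    also have "\<dots> < u * r1 + v * r2"
    proof (cases "u = 0")
      case True then show ?thesis using uv h1 by simp
    next
      case False then have "u > 0" using uv by simp
      then have "u * F y1 < u * r1" using h1 by simp
      moreover have "v * F y2 \<le> v * r2" using h1 uv by (intro mult_left_mono) auto
      ultimately show ?thesis by simp
    qed
    finally show "u *\<^sub>R p + v *\<^sub>R q \<in> A" using p' q' by (simp add: A_def)
  qed
  have convB: "convex B"
  proof (rule convexI)
    fix p q :: "'a \<times> real" and u v :: real
    assume p: "p \<in> B" and q: "q \<in> B" and u0: "0 \<le> u" and v0: "0 \<le> v" and uv1: "u + v = 1"
    have uv: "0 \<le> u \<and> 0 \<le> v \<and> u + v = 1" using u0 v0 uv1 by simp
    obtain y1 r1 where p': "p = (y1, r1)" by force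
    obtain y2 r2 where q': "q = (y2, r2)" by force
    have h1: "r1 \<le> G y1" "r2 \<le> G y2" using p q p' q' by (auto simp: B_def)
    have "g (u *\<^sub>R y1 + v *\<^sub>R y2) \<le> u * g y1 + v * g y2"
      using convex_onD[OF cg, of v y1 y2] uv by (subgoal_tac "u = 1 - v") auto
    then have "u * G y1 + v * G y2 \<le> G (u *\<^sub>R y1 + v *\<^sub>R y2)"
      using uv unfolding G_def by (simp add: algebra_simps flip: distrib_right)
    moreover have "u * r1 + v * r2 \<le> u * G y1 + v * G y2"
      using h1 uv by (intro add_mono mult_left_mono) auto
    ultimately show "u *\<^sub>R p + v *\<^sub>R q \<in> B" using p' q' by (simp add: B_def)
  qed
  have "(x, 1) \<in> A" by (simp add: A_def F_def)
  then have neA: "A \<noteq> {}" by auto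
  have "(x, 0) \<in> B" by (simp add: B_def G_def)
  then have neB: "B \<noteq> {}" by auto
  have disj: "A \<inter> B = {}"
  proof (rule ccontr)
    assume "A \<inter> B \<noteq> {}"
    then obtain y r where "(y, r) \<in> A" "(y, r) \<in> B" by auto
    then have "F y < r" "r \<le> G y" by (auto simp: A_def B_def)
    with FG[of y] show False by simp
  qed
  obtain w c where w: "w \<noteq> 0" and wA: "\<forall>z\<in>A. inner w z \<le> c" and wB: "\<forall>z\<in>B. inner w z \<ge> c"
    using separating_hyperplane_sets[OF convA convB neA neB disj] by blast
  obtain p \<alpha> where wp: "w = (p, \<alpha>)" by force
  have A1: "inner p y + \<alpha> * r \<le> c" if "F y < r" for y r
    using wA that by (auto simp: A_def wp)
  have B1: "inner p y + \<alpha> * r \<ge> c" if "r \<le> G y" for y r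
    using wB that by (auto simp: B_def wp)
  have Fx: "F x = 0" and Gx: "G x = 0" by (simp_all add: F_def G_def)
  have al: "\<alpha> < 0"
  proof (rule ccontr)
    assume "\<not> \<alpha> < 0"
    then have a0: "\<alpha> \<ge> 0" by simp
    show False
    proof (cases "\<alpha> = 0")
      case True
      have "inner p y \<le> c" for y using A1[of y "F y + 1"] True by simp
      moreover have "inner p y \<ge> c" for y using B1[of "G y" y] True by simp
      ultimately have "inner p y = c" for y by (meson order_antisym)
      then have "inner p p = inner p 0" by (metis (no_types))
      then have "p = 0" by simp
      with True wp w show False by (simp add: zero_prod_def)
    next
      case False
      then have "\<alpha> > 0" using a0 by simp
      have "inner p x + \<alpha> * ((\<bar>c - inner p x\<bar> + 1) / \<alpha>) \<le> c"
        using A1[of x "(\<bar>c - inner p x\<bar> + 1) / \<alpha>"] Fx \<open>0 < \<alpha>\<close> by (simp add: add_pos_nonneg)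
      then show False using \<open>\<alpha> > 0\<close> by (simp; smt (verit) abs_ge_self)
    qed
  qed
  define k where "k = - \<alpha>"
  have k: "k > 0" using al by (simp add: k_def)
  have cx: "c = inner p x"
  proof -
    have "inner p x \<ge> c" using B1[of 0 x] Gx by simp
    moreover have "inner p x \<le> c + t * k" if "0 < t" "t < 1" for t
    proof -
      have "inner p x + \<alpha> * t \<le> c" using A1[of x t] Fx that by simp
      then show ?thesis by (simp add: k_def algebra_simps)
    qed
    then have "inner p x \<le> c" using le_of_eps[of k "inner p x" c] k by simp
    ultimately show ?thesis by simp
  qed
  have Fy: "inner p (y - x) \<le> k * F y" for y
  proof -
    have e: "inner p y - k * F y \<le> c + t * k" if "0 < t" "t < 1" for t
    proof -
      have "inner p y + \<alpha> * (F y + t) \<le> c" using A1[of y "F y + t"] that by simp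
      then show ?thesis unfolding k_def by (simp add: algebra_simps)
    qed
    have "inner p y - k * F y \<le> c" using le_of_eps[of k "inner p y - k * F y" c, OF _ e] k by simp
    then show ?thesis using cx by (simp add: inner_diff_right)
  qed
  have Gy: "k * G y \<le> inner p (y - x)" for y
    using B1[of "G y" y] cx by (simp add: k_def inner_diff_right)
  define a where "a = s + (1/k) *\<^sub>R p"
  define b where "b = - (1/k) *\<^sub>R p"
  have "subgr f x a"
    unfolding subgr_def
  proof
    fix y
    have "(1/k) * inner p (y - x) \<le> (1/k) * (k * F y)"
      using Fy[of y] k by (intro mult_left_mono) auto
    then have "inner ((1/k) *\<^sub>R p) (y - x) \<le> F y" using k by simp
    then show "f x + inner a (y - x) \<le> f y" by (simp add: a_def F_def inner_add_left)
  qed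
  moreover have "subgr g x b"
    unfolding subgr_def
  proof
    fix y
    have "(1/k) * (k * G y) \<le> (1/k) * inner p (y - x)"
      using Gy[of y] k by (intro mult_left_mono) auto
    then have "G y \<le> inner ((1/k) *\<^sub>R p) (y - x)" using k by simp
    then show "g x + inner b (y - x) \<le> g y" by (simp add: b_def G_def)
  qed
  moreover have "a + b = s" by (simp add: a_def b_def)
  ultimately show ?thesis by blast
qed

lemma convex_on_sum_fun:
  fixes F :: "nat \<Rightarrow> 'a::real_vector \<Rightarrow> real"
  assumes "\<And>j. j \<in> {1..k} \<Longrightarrow> convex_on UNIV (F j)"
  shows "convex_on UNIV (\<lambda>y. \<Sum>j=1..k. F j y)"
  using assms
proof (induction k)
  case 0
  show ?case by (simp add: convex_on_def)
next
  case (Suc k)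
  have "convex_on UNIV (\<lambda>y. (\<Sum>j=1..k. F j y) + F (Suc k) y)"
    using Suc by (intro convex_on_add) auto
  then show ?case by (simp add: add.commute)
qed

lemma subgr_sum:
  fixes F :: "nat \<Rightarrow> 'a::euclidean_space \<Rightarrow> real"
  assumes "\<And>j. j \<in> {1..k} \<Longrightarrow> convex_on UNIV (F j)"
    and "subgr (\<lambda>y. \<Sum>j=1..k. F j y) x s"
  shows "\<exists>\<sigma>. (\<forall>j\<in>{1..k}. subgr (F j) x (\<sigma> j)) \<and> (\<Sum>j=1..k. \<sigma> j) = s"
  using assms
proof (induction k arbitrary: s)
  case 0
  then have "0 + inner s (y - x) \<le> 0" for y by (simp add: subgr_def)
  from this[of "x + s"] have "inner s s \<le> 0" by simp
  then have "s = 0" by (metis inner_eq_zero_iff order_antisym inner_ge_zero)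
  then show ?case by simp
next
  case (Suc k)
  have c1: "convex_on UNIV (\<lambda>y. \<Sum>j=1..k. F j y)"
    using Suc.prems(1) by (intro convex_on_sum_fun) auto
  have c2: "convex_on UNIV (F (Suc k))" using Suc.prems(1) by simp
  have "subgr (\<lambda>y. (\<Sum>j=1..k. F j y) + F (Suc k) y) x s"
    using Suc.prems(2) by (simp add: add.commute)
  then obtain a b where ab: "subgr (\<lambda>y. \<Sum>j=1..k. F j y) x a" "subgr (F (Suc k)) x b" "a + b = s"
    using subgr_sum2[OF c1 c2] by blast
  obtain \<sigma> where \<sigma>: "\<forall>j\<in>{1..k}. subgr (F j) x (\<sigma> j)" "(\<Sum>j=1..k. \<sigma> j) = a"
    using Suc.IH[OF _ ab(1)] Suc.prems(1) by auto
  define \<sigma>' where "\<sigma>' = \<sigma>(Suc k := b)"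
  have "(\<Sum>j=1..k. \<sigma>' j) = a" using \<sigma>(2) by (simp add: \<sigma>'_def)
  then have "(\<Sum>j=1..Suc k. \<sigma>' j) = s" using ab(3) by (simp add: \<sigma>'_def add.commute)
  moreover have "\<forall>j\<in>{1..Suc k}. subgr (F j) x (\<sigma>' j)"
    using \<sigma>(1) ab(2) by (auto simp: \<sigma>'_def le_Suc_eq)
  ultimately show ?case by blast
qed

lemma subgr_quad:
  fixes g :: "'a::real_inner \<Rightarrow> real"
  assumes cg: "convex_on UNIV g" and nu: "\<nu> \<ge> 0"
    and sg: "subgr (\<lambda>y. g y + \<nu> / 2 * (norm y)\<^sup>2) x s"
  shows "subgr g x (s - \<nu> *\<^sub>R x)"
  unfolding subgr_def
proof
  fix y
  define d where "d = y - x"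
  have key: "g x + inner (s - \<nu> *\<^sub>R x) d \<le> g y + t * (\<nu> / 2 * (norm d)\<^sup>2)"
    if t: "0 < t" "t < 1" for t
  proof -
    have "g ((1 - t) *\<^sub>R x + t *\<^sub>R y) \<le> (1 - t) * g x + t * g y"
      using convex_onD[OF cg, of t x y] t by simp
    moreover have "(1 - t) *\<^sub>R x + t *\<^sub>R y = x + t *\<^sub>R d"
      by (simp add: d_def algebra_simps)
    ultimately have c: "g (x + t *\<^sub>R d) \<le> (1 - t) * g x + t * g y" by simp
    have s: "g x + \<nu> / 2 * (norm x)\<^sup>2 + inner s (t *\<^sub>R d) \<le> g (x + t *\<^sub>R d) + \<nu> / 2 * (norm (x + t *\<^sub>R d))\<^sup>2"
      using sg unfolding subgr_def by (metis add_diff_cancel_left')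
    have n: "(norm (x + t *\<^sub>R d))\<^sup>2 = (norm x)\<^sup>2 + 2 * t * inner x d + t\<^sup>2 * (norm d)\<^sup>2"
      unfolding power2_norm_eq_inner by (simp add: inner_add_left inner_add_right inner_commute power2_eq_square algebra_simps)
    have c2: "g (x + t *\<^sub>R d) \<le> g x - t * g x + t * g y" using c by (simp add: algebra_simps)
    have s1: "inner s (t *\<^sub>R d) = t * inner s d" by simp
    have n2: "\<nu> / 2 * (norm (x + t *\<^sub>R d))\<^sup>2 = \<nu> / 2 * (norm x)\<^sup>2 + \<nu> * t * inner x d + \<nu> / 2 * t\<^sup>2 * (norm d)\<^sup>2"
      unfolding n by (simp add: field_simps)
    have lin: "t * g x + t * inner s d - \<nu> * t * inner x d \<le> t * g y + \<nu> / 2 * t\<^sup>2 * (norm d)\<^sup>2"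
      using c2 s s1 n2 by linarith
    have "t * (g x + inner (s - \<nu> *\<^sub>R x) d) = t * g x + t * inner s d - \<nu> * t * inner x d"
      by (simp add: inner_diff_left algebra_simps)
    moreover have "t * (g y + t * (\<nu> / 2 * (norm d)\<^sup>2)) = t * g y + \<nu> / 2 * t\<^sup>2 * (norm d)\<^sup>2"
      by (simp add: algebra_simps power2_eq_square)
    ultimately have "t * (g x + inner (s - \<nu> *\<^sub>R x) d) \<le> t * (g y + t * (\<nu> / 2 * (norm d)\<^sup>2))"
      using lin by simp
    then show ?thesis using t by simp
  qed
  have "g x + inner (s - \<nu> *\<^sub>R x) d \<le> g y"
    using le_of_eps[of "\<nu> / 2 * (norm d)\<^sup>2" _ "g y", OF _ key] nu by simp
  then show "g x + inner (s - \<nu> *\<^sub>R x) (y - x) \<le> g y" by (simp add: d_def)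
qed

lemma convex_on_sq:
  fixes c :: real
  assumes c: "c \<ge> 0"
  shows "convex_on UNIV (\<lambda>x::'a::real_inner. c * (norm x)\<^sup>2)"
proof (rule convex_onI)
  fix t :: real and x y :: 'a
  assume t: "0 < t" "t < 1"
  have id: "(1 - t) * (norm x)\<^sup>2 + t * (norm y)\<^sup>2 - (norm ((1 - t) *\<^sub>R x + t *\<^sub>R y))\<^sup>2
      = t * (1 - t) * (norm (x - y))\<^sup>2"
    unfolding power2_norm_eq_inner by (simp add: inner_add_left inner_add_right inner_diff_left inner_diff_right
        inner_commute algebra_simps)
  have "0 \<le> t * (1 - t) * (norm (x - y))\<^sup>2" using t by simp
  then have "(norm ((1 - t) *\<^sub>R x + t *\<^sub>R y))\<^sup>2 \<le> (1 - t) * (norm x)\<^sup>2 + t * (norm y)\<^sup>2"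
    using id by linarith
  then have "c * (norm ((1 - t) *\<^sub>R x + t *\<^sub>R y))\<^sup>2 \<le> c * ((1 - t) * (norm x)\<^sup>2 + t * (norm y)\<^sup>2)"
    using c by (rule mult_left_mono)
  then show "c * (norm ((1 - t) *\<^sub>R x + t *\<^sub>R y))\<^sup>2 \<le> (1 - t) * (c * (norm x)\<^sup>2) + t * (c * (norm y)\<^sup>2)"
    by (simp add: algebra_simps)
qed simp

lemma norm_sum_sq:
  fixes v :: "nat \<Rightarrow> 'a::real_normed_vector"
  shows "(norm (\<Sum>j=1..N. v j))\<^sup>2 \<le> real N * (\<Sum>j=1..N. (norm (v j))\<^sup>2)"
proof -
  have "(norm (\<Sum>j=1..N. v j))\<^sup>2 \<le> (\<Sum>j=1..N. norm (v j))\<^sup>2"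
    by (intro power_mono norm_sum) auto
  also have "\<dots> \<le> (\<Sum>j=1..N. (norm (v j))\<^sup>2) * card {1..N}"
    by (rule sum_squared_le_sum_of_squares)
  finally show ?thesis by (simp add: mult.commute)
qed

lemma t_suc: "dualfl_t 0 (Suc n) = (1 + sqrt (1 + 4 * (dualfl_t 0 n)\<^sup>2)) / 2"
  by simp

lemma t_rec: "(dualfl_t 0 (Suc n))\<^sup>2 - dualfl_t 0 (Suc n) = (dualfl_t 0 n)\<^sup>2"
proof -
  define q where "q = sqrt (1 + 4 * (dualfl_t 0 n)\<^sup>2)"
  have q2: "q\<^sup>2 = 1 + 4 * (dualfl_t 0 n)\<^sup>2" unfolding q_def by (simp add: add_nonneg_nonneg)
  have "(dualfl_t 0 (Suc n))\<^sup>2 - dualfl_t 0 (Suc n) = ((1 + q) / 2)\<^sup>2 - (1 + q) / 2"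
    by (simp add: q_def)
  also have "\<dots> = (q\<^sup>2 - 1) / 4" by (simp add: power2_eq_square field_simps)
  also have "\<dots> = (dualfl_t 0 n)\<^sup>2" using q2 by simp
  finally show ?thesis .
qed

lemma t_bounds: "1 \<le> dualfl_t 0 n \<and> (real n + 2) / 2 \<le> dualfl_t 0 n \<and> dualfl_t 0 n \<le> real n + 1"
proof (induction n)
  case 0
  then show ?case by simp
next
  case (Suc n)
  define t where "t = dualfl_t 0 n"
  have t1: "t \<ge> 1" using Suc by (simp add: t_def)
  have lo: "2 * t \<le> sqrt (1 + 4 * t\<^sup>2)"
    by (rule real_le_rsqrt) (use t1 in \<open>simp add: power2_eq_square\<close>)
  have "sqrt (1 + 4 * t\<^sup>2) \<le> sqrt ((1 + 2 * t)\<^sup>2)"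
    by (rule real_sqrt_le_mono) (use t1 in \<open>simp add: power2_eq_square algebra_simps\<close>)
  then have hi: "sqrt (1 + 4 * t\<^sup>2) \<le> 1 + 2 * t" using t1 by simp
  have "dualfl_t 0 (Suc n) = (1 + sqrt (1 + 4 * t\<^sup>2)) / 2" by (simp add: t_def)
  then show ?case using lo hi Suc t1 by (simp add: t_def)
qed

lemma beta0: "dualfl_beta 0 n = (dualfl_t 0 n - 1) / dualfl_t 0 (Suc n)"
  unfolding dualfl_beta_def by simp

lemma vec_id:
  fixes a b c e z :: "'a::real_inner"
  assumes tt: "t * t - t = \<tau> * \<tau>" and t0: "t \<noteq> 0"
    and e: "e = b + ((\<tau> - 1) / t) *\<^sub>R (b - a)"
  shows "\<tau>\<^sup>2 * (2 * inner (c - b) (e - c)) + t * (2 * inner (c - z) (e - c)) + t\<^sup>2 * (norm (c - e))\<^sup>2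
    = (norm (\<tau> *\<^sub>R b - (\<tau> - 1) *\<^sub>R a - z))\<^sup>2 - (norm (t *\<^sub>R c - (t - 1) *\<^sub>R b - z))\<^sup>2"
proof -
  define X where "X = t *\<^sub>R c - (t - 1) *\<^sub>R b - z"
  define Y where "Y = t *\<^sub>R (e - c)"
  have te: "t *\<^sub>R e = t *\<^sub>R b + (\<tau> - 1) *\<^sub>R (b - a)"
    using t0 by (simp add: e scaleR_add_right)
  have XY: "X + Y = \<tau> *\<^sub>R b - (\<tau> - 1) *\<^sub>R a - z"
  proof -
    have "X + Y = t *\<^sub>R e - (t - 1) *\<^sub>R b - z"
      by (simp add: X_def Y_def algebra_simps)
    also have "\<dots> = \<tau> *\<^sub>R b - (\<tau> - 1) *\<^sub>R a - z"
      by (simp add: te algebra_simps)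
    finally show ?thesis .
  qed
  have Xd: "X = (t - 1) *\<^sub>R (c - b) + (c - z)"
    by (simp add: X_def algebra_simps)
  have "(norm (X + Y))\<^sup>2 - (norm X)\<^sup>2 = 2 * inner X Y + (norm Y)\<^sup>2"
    unfolding power2_norm_eq_inner by (simp add: inner_add_left inner_add_right inner_commute)
  also have "inner X Y = t * (t - 1) * inner (c - b) (e - c) + t * inner (c - z) (e - c)"
    by (simp add: Xd Y_def inner_add_left algebra_simps)
  also have "(norm Y)\<^sup>2 = t\<^sup>2 * (norm (c - e))\<^sup>2"
    by (simp add: Y_def power_mult_distrib norm_minus_commute)
  also have "t * (t - 1) = \<tau>\<^sup>2" using tt by (simp add: power2_eq_square algebra_simps)
  finally have "(norm (X + Y))\<^sup>2 - (norm X)\<^sup>2 = \<tau>\<^sup>2 * (2 * inner (c - b) (e - c)) + t * (2 * inner (c - z) (e - c)) + t\<^sup>2 * (norm (c - e))\<^sup>2"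
    by (simp add: algebra_simps)
  then show ?thesis unfolding XY[symmetric] X_def[symmetric] by simp
qed

lemma key_step:
  fixes g :: "nat \<Rightarrow> 'a::real_inner \<Rightarrow> real" and \<eta> \<xi>' \<xi>b \<theta>' :: "nat \<Rightarrow> 'a" and cb :: "nat \<Rightarrow> real"
  assumes nu: "\<nu> > 0" and N: "N \<ge> 1"
    and th: "\<And>j. j \<in> {1..N} \<Longrightarrow> \<theta>' j = (1/\<nu>) *\<^sub>R ((\<eta> j - \<xi>' j) - (1 / real N) *\<^sub>R (\<Sum>k=1..N. \<eta> k))"
    and cb: "\<And>j y. j \<in> {1..N} \<Longrightarrow> inner (\<xi>b j) y - g j y \<le> cb j"
  shows "(\<Sum>j=1..N. inner (\<xi>' j) (\<theta>' j) - g j (\<theta>' j)) + (norm (\<Sum>j=1..N. \<xi>' j))\<^sup>2 / (2 * N * \<nu>)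
    \<le> (\<Sum>j=1..N. cb j) + (norm (\<Sum>j=1..N. \<xi>b j))\<^sup>2 / (2 * N * \<nu>)
       + (1/\<nu>) * (\<Sum>j=1..N. inner (\<xi>' j - \<xi>b j) (\<eta> j - \<xi>' j))
       + (1/(2*\<nu>)) * (\<Sum>j=1..N. (norm (\<xi>' j - \<eta> j))\<^sup>2)"
proof -
  define A where "A = (\<Sum>j=1..N. \<xi>' j)"
  define B where "B = (\<Sum>j=1..N. \<xi>b j)"
  define C where "C = (\<Sum>j=1..N. \<eta> j)"
  define m where "m = (1 / real N) *\<^sub>R C"
  have Npos: "real N > 0" using N by simp
  have a: "inner (\<xi>' j) (\<theta>' j) - g j (\<theta>' j) \<le> cb j + inner (\<xi>' j - \<xi>b j) (\<theta>' j)" if "j \<in> {1..N}" for j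
    using cb[OF that, of "\<theta>' j"] by (simp add: inner_diff_left)
  have s1: "(\<Sum>j=1..N. inner (\<xi>' j) (\<theta>' j) - g j (\<theta>' j)) \<le> (\<Sum>j=1..N. cb j) + (\<Sum>j=1..N. inner (\<xi>' j - \<xi>b j) (\<theta>' j))"
    using sum_mono[of "{1..N}", OF a] by (simp add: sum.distrib)
  have in1: "inner (\<xi>' j - \<xi>b j) (\<theta>' j) = (1/\<nu>) * inner (\<xi>' j - \<xi>b j) (\<eta> j - \<xi>' j) - (1/\<nu>) * inner (\<xi>' j - \<xi>b j) m"
    if "j \<in> {1..N}" for j
    using th[OF that] by (simp add: m_def C_def inner_diff_right diff_divide_distrib)
  have s2: "(\<Sum>j=1..N. inner (\<xi>' j - \<xi>b j) (\<theta>' j)) = (1/\<nu>) * (\<Sum>j=1..N. inner (\<xi>' j - \<xi>b j) (\<eta> j - \<xi>' j)) - (1/\<nu>) * inner (A - B) m"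
  proof -
    have "(\<Sum>j=1..N. inner (\<xi>' j - \<xi>b j) (\<theta>' j)) = (\<Sum>j=1..N. (1/\<nu>) * inner (\<xi>' j - \<xi>b j) (\<eta> j - \<xi>' j) - (1/\<nu>) * inner (\<xi>' j - \<xi>b j) m)"
      using in1 by (rule sum.cong[OF refl])
    also have "\<dots> = (1/\<nu>) * (\<Sum>j=1..N. inner (\<xi>' j - \<xi>b j) (\<eta> j - \<xi>' j)) - (1/\<nu>) * (\<Sum>j=1..N. inner (\<xi>' j - \<xi>b j) m)"
      by (simp add: sum_subtractf sum_distrib_left)
    also have "(\<Sum>j=1..N. inner (\<xi>' j - \<xi>b j) m) = inner (A - B) m"
      by (simp add: A_def B_def inner_sum_left sum_subtractf inner_diff_left)
    finally show ?thesis .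
  qed
  have s3: "(norm A)\<^sup>2 - (norm B)\<^sup>2 - 2 * inner (A - B) C \<le> real N * (\<Sum>j=1..N. (norm (\<xi>' j - \<eta> j))\<^sup>2)"
  proof -
    have "(norm A)\<^sup>2 - (norm B)\<^sup>2 - 2 * inner (A - B) C = (norm (A - C))\<^sup>2 - (norm (B - C))\<^sup>2"
      unfolding power2_norm_eq_inner by (simp add: inner_diff_left inner_diff_right inner_commute)
    also have "\<dots> \<le> (norm (A - C))\<^sup>2" by simp
    also have "A - C = (\<Sum>j=1..N. \<xi>' j - \<eta> j)" by (simp add: A_def C_def sum_subtractf)
    also have "(norm (\<Sum>j=1..N. \<xi>' j - \<eta> j))\<^sup>2 \<le> real N * (\<Sum>j=1..N. (norm (\<xi>' j - \<eta> j))\<^sup>2)"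
      by (rule norm_sum_sq)
    finally show ?thesis .
  qed
  have s4: "(norm A)\<^sup>2 / (2 * N * \<nu>) - (norm B)\<^sup>2 / (2 * N * \<nu>) - (1/\<nu>) * inner (A - B) m
      \<le> (1/(2*\<nu>)) * (\<Sum>j=1..N. (norm (\<xi>' j - \<eta> j))\<^sup>2)"
  proof -
    have "(norm A)\<^sup>2 / (2 * N * \<nu>) - (norm B)\<^sup>2 / (2 * N * \<nu>) - (1/\<nu>) * inner (A - B) m
        = ((norm A)\<^sup>2 - (norm B)\<^sup>2 - 2 * inner (A - B) C) / (2 * N * \<nu>)"
      using Npos nu by (simp add: m_def field_simps)
    also have "\<dots> \<le> (real N * (\<Sum>j=1..N. (norm (\<xi>' j - \<eta> j))\<^sup>2)) / (2 * N * \<nu>)"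
      using s3 Npos nu by (intro divide_right_mono) auto
    also have "\<dots> = (1/(2*\<nu>)) * (\<Sum>j=1..N. (norm (\<xi>' j - \<eta> j))\<^sup>2)"
      using Npos nu by (simp add: field_simps)
    finally show ?thesis .
  qed
  show ?thesis using s1 s2 s4 unfolding A_def[symmetric] B_def[symmetric] by linarith
qed

lemma lyap_step:
  fixes \<xi>0 \<xi> \<xi>' \<xi>s \<eta> :: "nat \<Rightarrow> 'a::real_inner"
  assumes nu: "\<nu> > 0" and t1: "t \<ge> 1" and tsq: "t\<^sup>2 - t = \<tau>\<^sup>2"
    and eta: "\<And>j. j \<in> {1..N} \<Longrightarrow> \<eta> j = \<xi> j + ((\<tau> - 1) / t) *\<^sub>R (\<xi> j - \<xi>0 j)"
    and K1: "P' \<le> Pn + E + (1/\<nu>) * (\<Sum>j=1..N. inner (\<xi>' j - \<xi> j) (\<eta> j - \<xi>' j)) + Q"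
    and K2: "P' \<le> \<Phi> + (1/\<nu>) * (\<Sum>j=1..N. inner (\<xi>' j - \<xi>s j) (\<eta> j - \<xi>' j)) + Q"
    and Q: "Q = (1/(2*\<nu>)) * (\<Sum>j=1..N. (norm (\<xi>' j - \<eta> j))\<^sup>2)"
  shows "t\<^sup>2 * (P' - \<Phi>) + (1/(2*\<nu>)) * (\<Sum>j=1..N. (norm (t *\<^sub>R \<xi>' j - (t - 1) *\<^sub>R \<xi> j - \<xi>s j))\<^sup>2)
    \<le> \<tau>\<^sup>2 * (Pn + E - \<Phi>) + (1/(2*\<nu>)) * (\<Sum>j=1..N. (norm (\<tau> *\<^sub>R \<xi> j - (\<tau> - 1) *\<^sub>R \<xi>0 j - \<xi>s j))\<^sup>2)"
proof -
  define I1 where "I1 = (\<Sum>j=1..N. inner (\<xi>' j - \<xi> j) (\<eta> j - \<xi>' j))"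
  define I2 where "I2 = (\<Sum>j=1..N. inner (\<xi>' j - \<xi>s j) (\<eta> j - \<xi>' j))"
  define R where "R = (\<Sum>j=1..N. (norm (\<xi>' j - \<eta> j))\<^sup>2)"
  define U1 where "U1 = (\<Sum>j=1..N. (norm (t *\<^sub>R \<xi>' j - (t - 1) *\<^sub>R \<xi> j - \<xi>s j))\<^sup>2)"
  define U0 where "U0 = (\<Sum>j=1..N. (norm (\<tau> *\<^sub>R \<xi> j - (\<tau> - 1) *\<^sub>R \<xi>0 j - \<xi>s j))\<^sup>2)"
  have tt: "t * t - t = \<tau> * \<tau>" using tsq by (simp add: power2_eq_square)
  have id: "\<tau>\<^sup>2 * (2 * I1) + t * (2 * I2) + t\<^sup>2 * R = U0 - U1"
  proof -
    have "\<tau>\<^sup>2 * (2 * I1) + t * (2 * I2) + t\<^sup>2 * R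
      = (\<Sum>j=1..N. \<tau>\<^sup>2 * (2 * inner (\<xi>' j - \<xi> j) (\<eta> j - \<xi>' j)) + t * (2 * inner (\<xi>' j - \<xi>s j) (\<eta> j - \<xi>' j)) + t\<^sup>2 * (norm (\<xi>' j - \<eta> j))\<^sup>2)"
      by (simp add: I1_def I2_def R_def sum.distrib sum_distrib_left)
    also have "\<dots> = (\<Sum>j=1..N. (norm (\<tau> *\<^sub>R \<xi> j - (\<tau> - 1) *\<^sub>R \<xi>0 j - \<xi>s j))\<^sup>2 - (norm (t *\<^sub>R \<xi>' j - (t - 1) *\<^sub>R \<xi> j - \<xi>s j))\<^sup>2)"
      by (rule sum.cong[OF refl], rule vec_id[OF tt]) (use t1 eta in auto)
    also have "\<dots> = U0 - U1" by (simp add: U0_def U1_def sum_subtractf)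
    finally show ?thesis .
  qed
  have tau2: "\<tau>\<^sup>2 \<ge> 0" by simp
  have c1: "\<tau>\<^sup>2 * P' \<le> \<tau>\<^sup>2 * (Pn + E + (1/\<nu>) * I1 + Q)"
    using K1 tau2 unfolding I1_def by (intro mult_left_mono) auto
  have c2: "t * P' \<le> t * (\<Phi> + (1/\<nu>) * I2 + Q)"
    using K2 t1 unfolding I2_def by (intro mult_left_mono) auto
  have sum: "t\<^sup>2 * P' \<le> \<tau>\<^sup>2 * (Pn + E) + t * \<Phi> + (1/(2*\<nu>)) * (\<tau>\<^sup>2 * (2 * I1) + t * (2 * I2) + t\<^sup>2 * R)"
  proof -
    have "t\<^sup>2 * P' = \<tau>\<^sup>2 * P' + t * P'" using tsq by (simp add: algebra_simps)
    also have "\<dots> \<le> \<tau>\<^sup>2 * (Pn + E + (1/\<nu>) * I1 + Q) + t * (\<Phi> + (1/\<nu>) * I2 + Q)" using c1 c2 by simp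
    also have "\<dots> = \<tau>\<^sup>2 * (Pn + E) + t * \<Phi> + (1/(2*\<nu>)) * (\<tau>\<^sup>2 * (2 * I1) + t * (2 * I2) + (\<tau>\<^sup>2 + t) * R)"
      using nu by (simp add: Q R_def field_simps)
    also have "\<tau>\<^sup>2 + t = t\<^sup>2" using tsq by simp
    finally show ?thesis .
  qed
  have "t\<^sup>2 * (P' - \<Phi>) + (1/(2*\<nu>)) * U1 \<le> \<tau>\<^sup>2 * (Pn + E - \<Phi>) + (1/(2*\<nu>)) * U0"
  proof -
    have "t\<^sup>2 * (P' - \<Phi>) + (1/(2*\<nu>)) * U1 = t\<^sup>2 * P' - t\<^sup>2 * \<Phi> + (1/(2*\<nu>)) * U1" by (simp add: algebra_simps)
    also have "\<dots> \<le> \<tau>\<^sup>2 * (Pn + E) + t * \<Phi> + (1/(2*\<nu>)) * (U0 - U1) - t\<^sup>2 * \<Phi> + (1/(2*\<nu>)) * U1"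
      using sum id by simp
    also have "\<dots> = \<tau>\<^sup>2 * (Pn + E) + t * \<Phi> + (1/(2*\<nu>)) * U0 - t\<^sup>2 * \<Phi>"
      by (simp add: right_diff_distrib)
    also have "\<dots> = \<tau>\<^sup>2 * (Pn + E - \<Phi>) + (1/(2*\<nu>)) * U0 + (\<tau>\<^sup>2 + t - t\<^sup>2) * \<Phi>"
      by (simp add: algebra_simps)
    also have "\<tau>\<^sup>2 + t - t\<^sup>2 = 0" using tsq by simp
    finally show ?thesis by simp
  qed
  then show ?thesis by (simp add: U0_def U1_def)
qed

lemma inv_sq_sum: "(\<Sum>k<n. 1 / (real k + 1)\<^sup>2) \<le> 2 - 2 / (real n + 1)"
proof (induction n)
  case 0
  then show ?case by simp
next
  case (Suc n)
  define x where "x = real n + 1"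
  have x1: "x \<ge> 1" by (simp add: x_def)
  have e1: "2 / x - 2 / (x + 1) = 2 / (x * (x + 1))" using x1 by (simp add: field_simps)
  have "1 / (x * x) \<le> 2 / (x * (x + 1))"
  proof -
    have "x * (x + 1) \<le> 2 * (x * x)" using x1 by (simp add: algebra_simps power2_eq_square)
    then show ?thesis using x1 by (simp add: divide_simps)
  qed
  then have "1 / (real n + 1)\<^sup>2 \<le> 2 / (real n + 1) - 2 / (real n + 2)"
    using e1 by (simp add: x_def power2_eq_square add.commute add.left_commute)
  then show ?case using Suc by (simp add: add.commute)
qed

theorem theorem3p2:
  fixes f :: "nat \<Rightarrow> 'a::euclidean_space \<Rightarrow> real"
    and N :: nat and \<mu> \<nu> \<gamma> :: real and \<theta>s :: 'a
    and \<theta> :: "nat \<Rightarrow> 'a"                 \<comment> \<open>\<theta> n = global iterate \<theta>^(n)\<close>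
    and \<theta>l :: "nat \<Rightarrow> nat \<Rightarrow> 'a"         \<comment> \<open>\<theta>l n j = local iterate \<theta>_j^(n)\<close>
    and \<zeta> :: "nat \<Rightarrow> nat \<Rightarrow> 'a"          \<comment> \<open>\<zeta> n j = \<zeta>_j^(n)\<close>
  assumes N: "N \<ge> 1"
    and cont: "\<And>j. j \<in> {1..N} \<Longrightarrow> continuous_on UNIV (f j)"
    and conv: "\<And>j. j \<in> {1..N} \<Longrightarrow> convex_on UNIV (f j)"
    and coercive: "filterlim (\<lambda>x. (1 / real N) * (\<Sum>j=1..N. f j x)) at_top at_infinity"
    and mu: "\<mu> > 0"
    and strong: "\<And>j. j \<in> {1..N} \<Longrightarrow> strongly_convex \<mu> (f j)"
    and min: "\<And>x. (1 / real N) * (\<Sum>j=1..N. f j \<theta>s) \<le> (1 / real N) * (\<Sum>j=1..N. f j x)"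
    and nu: "0 < \<nu>" "\<nu> \<le> \<mu>"
    and gamma: "\<gamma> > 0"
    and init_l: "\<And>j. \<theta>l 0 j = 0"
    and init_z: "\<And>j. \<zeta> 0 j = 0"
    and avg: "\<And>n. \<theta> n = (1 / real N) *\<^sub>R (\<Sum>j=1..N. \<theta>l n j)"
    and upd: "\<And>n j. j \<in> {1..N} \<Longrightarrow>
       \<zeta> (Suc n) j = (1 + dualfl_beta 0 n) *\<^sub>R (\<zeta> n j + \<theta> (Suc n) - \<theta>l (Suc n) j)
                     - dualfl_beta 0 n *\<^sub>R (\<zeta> (n - 1) j + \<theta> n - \<theta>l n j)"
    and inexact: "\<And>n j. j \<in> {1..N} \<Longrightarrow>
       pd_gap (f j) \<nu> (\<zeta> n j) (\<theta>l (Suc n) j)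
         \<le> ereal (1 / (real N * \<nu> * (real n + 1) powr (4 + \<gamma>)))"
  shows "\<theta> \<longlonglongrightarrow> \<theta>s \<and>
         (\<exists>C>0. \<forall>n\<ge>1. (norm (\<theta> n - \<theta>s))\<^sup>2 \<le> C / (real n)\<^sup>2)"
proof -
  define g where "g j y = f j y - \<nu> / 2 * (norm y)\<^sup>2" for j y
  define S :: "(nat \<Rightarrow> 'a) \<Rightarrow> 'a" where "S v = (\<Sum>j=1..N. v j)" for v
  define \<xi> where "\<xi> n j = (if n = 0 then 0 else \<nu> *\<^sub>R (\<zeta> (n - 1) j - \<theta>l n j))" for n j
  define a where "a n j = inner (\<xi> n j) (\<theta>l n j) - g j (\<theta>l n j)" for n j
  define h where "h v = (norm (S v))\<^sup>2 / (2 * N * \<nu>)" for v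
  define P where "P n = (\<Sum>j=1..N. a n j) + h (\<xi> n)" for n
  define tt where "tt n = dualfl_t 0 n" for n
  define \<eta> where "\<eta> n j = \<xi> n j + ((tt (n - 1) - 1) / tt n) *\<^sub>R (\<xi> n j - \<xi> (n - 1) j)" for n j
  define e where "e n = 1 / (\<nu> * (real n + 1) powr (4 + \<gamma>))" for n
  have Npos: "real N > 0" using N by simp
  have nu0: "\<nu> > 0" using nu by simp
  have Sdist: "S (\<lambda>j. c *\<^sub>R u j + d *\<^sub>R v j) = c *\<^sub>R S u + d *\<^sub>R S v" for c d u v
    by (simp add: S_def sum.distrib scaleR_sum_right)
  have Sdist2: "S (\<lambda>j. c *\<^sub>R u j - d *\<^sub>R v j) = c *\<^sub>R S u - d *\<^sub>R S v" for c d u v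
    by (simp add: S_def sum_subtractf scaleR_sum_right)
  have Sdiff: "S (\<lambda>j. u j - v j) = S u - S v" for u v
    by (simp add: S_def sum_subtractf)
  have Sconst: "S (\<lambda>j. c) = real N *\<^sub>R c" for c
    by (simp add: S_def sum_constant_scaleR)
  have avgS: "real N *\<^sub>R \<theta> k = S (\<theta>l k)" for k
    using Npos by (simp add: avg S_def)
  have bal: "S (\<lambda>j. z j + \<theta> k - \<theta>l k j) = S z" for z k
  proof -
    have "S (\<lambda>j. z j + \<theta> k - \<theta>l k j) = S z + real N *\<^sub>R \<theta> k - S (\<theta>l k)"
      by (simp add: S_def sum.distrib sum_subtractf sum_constant_scaleR)
    then show ?thesis using avgS by simp
  qed
  have zsum: "S (\<zeta> n) = 0" for n
  proof (induction n rule: less_induct)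
    case (less n)
    show ?case
    proof (cases n)
      case 0
      then show ?thesis by (simp add: S_def init_z)
    next
      case (Suc m)
      have "S (\<zeta> (Suc m)) = S (\<lambda>j. (1 + dualfl_beta 0 m) *\<^sub>R (\<zeta> m j + \<theta> (Suc m) - \<theta>l (Suc m) j)
                     - dualfl_beta 0 m *\<^sub>R (\<zeta> (m - 1) j + \<theta> m - \<theta>l m j))"
        unfolding S_def by (rule sum.cong[OF refl]) (simp add: upd)
      also have "\<dots> = (1 + dualfl_beta 0 m) *\<^sub>R S (\<lambda>j. \<zeta> m j + \<theta> (Suc m) - \<theta>l (Suc m) j)
                     - dualfl_beta 0 m *\<^sub>R S (\<lambda>j. \<zeta> (m - 1) j + \<theta> m - \<theta>l m j)"
        by (rule Sdist2)
      also have "\<dots> = (1 + dualfl_beta 0 m) *\<^sub>R S (\<zeta> m) - dualfl_beta 0 m *\<^sub>R S (\<zeta> (m - 1))"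
        by (simp only: bal)
      also have "\<dots> = 0" using less Suc by simp
      finally show ?thesis using Suc by simp
    qed
  qed
  have thl_eq: "\<theta>l (Suc m) j = \<zeta> m j - (1/\<nu>) *\<^sub>R \<xi> (Suc m) j" for m j
    using nu0 by (simp add: \<xi>_def)
  have th_xi: "\<theta> n = - (1 / (real N * \<nu>)) *\<^sub>R S (\<xi> n)" for n
  proof (cases n)
    case 0
    then show ?thesis by (simp add: avg init_l \<xi>_def S_def)
  next
    case (Suc m)
    have "S (\<theta>l (Suc m)) = S (\<zeta> m) - (1/\<nu>) *\<^sub>R S (\<xi> (Suc m))"
      by (simp add: thl_eq S_def sum_subtractf scaleR_sum_right)
    then have "S (\<theta>l (Suc m)) = - (1/\<nu>) *\<^sub>R S (\<xi> (Suc m))" using zsum by simp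
    then show ?thesis using Suc avg Npos nu0 unfolding S_def by simp
  qed
  have Zid: "\<zeta> (k - 1) j + \<theta> k - \<theta>l k j = (1/\<nu>) *\<^sub>R (\<xi> k j - (1 / real N) *\<^sub>R S (\<xi> k))" for k j
  proof (cases k)
    case 0
    then show ?thesis by (simp add: init_z init_l \<xi>_def S_def avg)
  next
    case (Suc m)
    then show ?thesis using nu0 by (simp add: thl_eq th_xi algebra_simps)
  qed
  have beta: "dualfl_beta 0 m = (tt m - 1) / tt (Suc m)" for m
    by (simp add: beta0 tt_def)
  have zeta_eta: "\<nu> *\<^sub>R \<zeta> n j = \<eta> n j - (1 / real N) *\<^sub>R S (\<eta> n)" if j: "j \<in> {1..N}" for n j
  proof (cases n)
    case 0
    then show ?thesis by (simp add: init_z \<eta>_def \<xi>_def S_def)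
  next
    case (Suc m)
    define b where "b = dualfl_beta 0 m"
    have e1: "\<eta> (Suc m) = (\<lambda>j. (1 + b) *\<^sub>R \<xi> (Suc m) j + (- b) *\<^sub>R \<xi> m j)"
      by (rule ext) (simp add: \<eta>_def b_def beta algebra_simps)
    have "\<nu> *\<^sub>R \<zeta> (Suc m) j = \<nu> *\<^sub>R ((1 + b) *\<^sub>R (\<zeta> m j + \<theta> (Suc m) - \<theta>l (Suc m) j)
                     - b *\<^sub>R (\<zeta> (m - 1) j + \<theta> m - \<theta>l m j))"
      using upd[OF j] by (simp add: b_def)
    also have "\<dots> = \<nu> *\<^sub>R ((1 + b) *\<^sub>R ((1/\<nu>) *\<^sub>R (\<xi> (Suc m) j - (1 / real N) *\<^sub>R S (\<xi> (Suc m))))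
                     - b *\<^sub>R ((1/\<nu>) *\<^sub>R (\<xi> m j - (1 / real N) *\<^sub>R S (\<xi> m))))"
      using Zid[of "Suc m" j] Zid[of m j] by simp
    also have "\<dots> = (1 + b) *\<^sub>R (\<xi> (Suc m) j - (1 / real N) *\<^sub>R S (\<xi> (Suc m)))
                     - b *\<^sub>R (\<xi> m j - (1 / real N) *\<^sub>R S (\<xi> m))"
      using nu0 by (simp add: scaleR_diff_right)
    also have "\<dots> = \<eta> (Suc m) j - (1 / real N) *\<^sub>R S (\<eta> (Suc m))"
      unfolding e1 Sdist by (simp add: algebra_simps add_divide_distrib flip: scaleR_add_left)
    finally show ?thesis using Suc by simp
  qed
  have gfun: "(\<lambda>x. f j x - \<nu> / 2 * (norm x)\<^sup>2) = g j" for j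
    by (rule ext) (simp add: g_def)
  have eopt: "inner (\<xi> (Suc n) j) y - g j y \<le> a (Suc n) j + e n / real N"
    if j: "j \<in> {1..N}" for n j y
  proof -
    define th where "th = \<theta>l (Suc n) j"
    define z where "z = \<zeta> n j"
    define p where "p = \<nu> *\<^sub>R (z - th)"
    have p: "\<xi> (Suc n) j = p" by (simp add: \<xi>_def p_def z_def th_def)
    define B where "B = 1 / (real N * \<nu> * (real n + 1) powr (4 + \<gamma>))"
    have B: "B = e n / real N" by (simp add: B_def e_def)
    define X where "X = f j th - \<nu> * inner z th"
    define W where "W = 1 / (2 * \<nu>) * (norm (p - \<nu> *\<^sub>R z))\<^sup>2"
    have gap: "ereal X + (fenchel_conj (g j) p + ereal W) \<le> ereal B"
      using inexact[OF j, of n]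
      unfolding pd_gap_def dual_energy_def local_energy_def gfun
      by (simp add: X_def W_def B_def p_def z_def th_def)
    have "ereal (inner p y - g j y) \<le> fenchel_conj (g j) p"
      unfolding fenchel_conj_def by (rule SUP_upper) simp
    then have mono: "ereal X + (ereal (inner p y - g j y) + ereal W) \<le> ereal X + (fenchel_conj (g j) p + ereal W)"
      by (intro add_left_mono add_right_mono)
    have eq: "ereal X + (ereal (inner p y - g j y) + ereal W) = ereal (X + (inner p y - g j y) + W)" by simp
    have "ereal (X + (inner p y - g j y) + W) \<le> ereal B"
      using order_trans[OF mono gap] unfolding eq .
    then have r: "X + (inner p y - g j y) + W \<le> B" by simp
    have W: "W = \<nu> / 2 * (norm th)\<^sup>2"
    proof -
      have "p - \<nu> *\<^sub>R z = - (\<nu> *\<^sub>R th)" by (simp add: p_def algebra_simps)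
      then have "(norm (p - \<nu> *\<^sub>R z))\<^sup>2 = \<nu>\<^sup>2 * (norm th)\<^sup>2" using nu0 by (simp add: power_mult_distrib)
      then show ?thesis using nu0 by (simp add: W_def power2_eq_square)
    qed
    have A: "a (Suc n) j = inner p th - g j th" by (simp add: a_def p th_def)
    have "inner p th - g j th = - X - W"
      unfolding W X_def p_def g_def
      by (simp add: inner_diff_left inner_commute power2_norm_eq_inner algebra_simps)
    then show ?thesis using r A B p by simp
  qed
  have gconv: "convex_on UNIV (g j)" if j: "j \<in> {1..N}" for j
  proof -
    have c1: "convex_on UNIV (\<lambda>x. f j x - \<mu> / 2 * (norm x)\<^sup>2)"
      using strong[OF j] by (simp add: strongly_convex_def)
    have c2: "convex_on UNIV (\<lambda>x::'a. (\<mu> - \<nu>) / 2 * (norm x)\<^sup>2)"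
      using nu by (intro convex_on_sq) simp
    have "convex_on UNIV (\<lambda>x. (f j x - \<mu> / 2 * (norm x)\<^sup>2) + (\<mu> - \<nu>) / 2 * (norm x)\<^sup>2)"
      using c1 c2 by (rule convex_on_add)
    moreover have "(\<lambda>x. (f j x - \<mu> / 2 * (norm x)\<^sup>2) + (\<mu> - \<nu>) / 2 * (norm x)\<^sup>2) = g j"
      by (rule ext) (simp add: g_def algebra_simps diff_divide_distrib)
    ultimately show ?thesis by simp
  qed
  have sg0: "subgr (\<lambda>y. \<Sum>j=1..N. f j y) \<theta>s 0"
    unfolding subgr_def
  proof
    fix y
    have "(1 / real N) * (\<Sum>j=1..N. f j \<theta>s) \<le> (1 / real N) * (\<Sum>j=1..N. f j y)" by (rule min)
    then show "(\<Sum>j=1..N. f j \<theta>s) + inner 0 (y - \<theta>s) \<le> (\<Sum>j=1..N. f j y)"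
      using Npos by (simp add: divide_right_mono_neg divide_le_cancel)
  qed
  obtain \<sigma> where \<sigma>: "\<forall>j\<in>{1..N}. subgr (f j) \<theta>s (\<sigma> j)" "(\<Sum>j=1..N. \<sigma> j) = 0"
    using subgr_sum[OF _ sg0] conv by blast
  define \<xi>s where "\<xi>s j = \<sigma> j - \<nu> *\<^sub>R \<theta>s" for j
  define cs where "cs j = inner (\<xi>s j) \<theta>s - g j \<theta>s" for j
  have sgg: "subgr (g j) \<theta>s (\<xi>s j)" if j: "j \<in> {1..N}" for j
  proof -
    have "(\<lambda>y. g j y + \<nu> / 2 * (norm y)\<^sup>2) = f j" by (rule ext) (simp add: g_def)
    then have "subgr (\<lambda>y. g j y + \<nu> / 2 * (norm y)\<^sup>2) \<theta>s (\<sigma> j)" using \<sigma>(1) j by simp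
    then show ?thesis unfolding \<xi>s_def using gconv[OF j] nu0 by (intro subgr_quad) auto
  qed
  have cs: "inner (\<xi>s j) y - g j y \<le> cs j" if j: "j \<in> {1..N}" for j y
    using sgg[OF j] unfolding subgr_def cs_def by (smt (verit) inner_diff_right)
  have Sxs: "S \<xi>s = - (real N * \<nu>) *\<^sub>R \<theta>s"
    using \<sigma>(2) by (simp add: S_def \<xi>s_def sum_subtractf sum_constant_scaleR)
  define \<Phi> where "\<Phi> = (\<Sum>j=1..N. cs j) + h \<xi>s"
  define U where "U n = (\<Sum>j=1..N. (norm (tt n *\<^sub>R \<xi> (Suc n) j - (tt n - 1) *\<^sub>R \<xi> n j - \<xi>s j))\<^sup>2)" for n
  define V where "V n = (tt n)\<^sup>2 * (P (Suc n) - \<Phi>) + (1/(2*\<nu>)) * U n" for n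
  define Q where "Q n = (1/(2*\<nu>)) * (\<Sum>j=1..N. (norm (\<xi> (Suc n) j - \<eta> n j))\<^sup>2)" for n
  have th_key: "\<theta>l (Suc n) j = (1/\<nu>) *\<^sub>R ((\<eta> n j - \<xi> (Suc n) j) - (1 / real N) *\<^sub>R (\<Sum>k=1..N. \<eta> n k))"
    if j: "j \<in> {1..N}" for n j
  proof -
    have "\<zeta> n j = (1/\<nu>) *\<^sub>R (\<nu> *\<^sub>R \<zeta> n j)" using nu0 by simp
    also have "\<dots> = (1/\<nu>) *\<^sub>R (\<eta> n j - (1 / real N) *\<^sub>R S (\<eta> n))"
      using zeta_eta[OF j, of n] by simp
    finally have "\<zeta> n j = (1/\<nu>) *\<^sub>R (\<eta> n j - (1 / real N) *\<^sub>R S (\<eta> n))" .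
    then show ?thesis unfolding thl_eq[of n j] by (simp add: S_def algebra_simps)
  qed
  have K2: "P (Suc n) \<le> \<Phi> + (1/\<nu>) * (\<Sum>j=1..N. inner (\<xi> (Suc n) j - \<xi>s j) (\<eta> n j - \<xi> (Suc n) j)) + Q n" for n
    using key_step[of \<nu> N "\<theta>l (Suc n)" "\<eta> n" "\<xi> (Suc n)" "\<xi>s" g cs, OF nu0 N th_key cs]
    by (simp add: P_def \<Phi>_def h_def S_def Q_def a_def)
  have K1: "P (Suc (Suc n)) \<le> P (Suc n) + e n + (1/\<nu>) * (\<Sum>j=1..N. inner (\<xi> (Suc (Suc n)) j - \<xi> (Suc n) j) (\<eta> (Suc n) j - \<xi> (Suc (Suc n)) j)) + Q (Suc n)" for n
  proof -
    have "(\<Sum>j=1..N. a (Suc n) j + e n / real N) = (\<Sum>j=1..N. a (Suc n) j) + e n"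
      using Npos by (simp add: sum.distrib)
    then show ?thesis
      using key_step[of \<nu> N "\<theta>l (Suc (Suc n))" "\<eta> (Suc n)" "\<xi> (Suc (Suc n))" "\<xi> (Suc n)" g "\<lambda>j. a (Suc n) j + e n / real N",
          OF nu0 N th_key eopt]
      by (simp add: P_def h_def S_def Q_def a_def)
  qed
  have V0: "V 0 \<le> (1/(2*\<nu>)) * (\<Sum>j=1..N. (norm (\<xi>s j))\<^sup>2)"
  proof -
    have "tt 0 = 1" by (simp add: tt_def)
    have eta0: "\<eta> 0 j = 0" for j by (simp add: \<eta>_def \<xi>_def)
    have L: "(tt 0)\<^sup>2 * (P (Suc 0) - \<Phi>) + (1/(2*\<nu>)) * (\<Sum>j=1..N. (norm (tt 0 *\<^sub>R \<xi> (Suc 0) j - (tt 0 - 1) *\<^sub>R \<xi> 0 j - \<xi>s j))\<^sup>2)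
      \<le> 0\<^sup>2 * ((P (Suc 0) - 0 - (1/\<nu>) * (\<Sum>j=1..N. inner (\<xi> (Suc 0) j - \<xi> 0 j) (\<eta> 0 j - \<xi> (Suc 0) j)) - Q 0) + 0 - \<Phi>)
        + (1/(2*\<nu>)) * (\<Sum>j=1..N. (norm (0 *\<^sub>R \<xi> 0 j - (0 - 1) *\<^sub>R (\<lambda>_. 0) j - \<xi>s j))\<^sup>2)"
      by (rule lyap_step[OF nu0 _ _ _ _ K2[of 0] Q_def]) (auto simp: \<open>tt 0 = 1\<close> eta0 \<xi>_def)
    then show ?thesis by (simp add: V_def U_def)
  qed
  have Vstep: "V (Suc n) \<le> V n + (tt n)\<^sup>2 * e n" for n
  proof -
    have t1: "tt (Suc n) \<ge> 1" using t_bounds[of "Suc n"] by (simp add: tt_def)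
    have tsq: "(tt (Suc n))\<^sup>2 - tt (Suc n) = (tt n)\<^sup>2" using t_rec[of n] by (simp add: tt_def)
    have eta: "\<eta> (Suc n) j = \<xi> (Suc n) j + ((tt n - 1) / tt (Suc n)) *\<^sub>R (\<xi> (Suc n) j - \<xi> n j)" for j
      by (simp add: \<eta>_def)
    have "V (Suc n) \<le> (tt n)\<^sup>2 * (P (Suc n) + e n - \<Phi>) + (1/(2*\<nu>)) * U n"
      using lyap_step[OF nu0 t1 tsq eta K1[of n] K2[of "Suc n"] Q_def]
      by (simp add: V_def U_def)
    then show ?thesis by (simp add: V_def algebra_simps)
  qed
  have termb: "(tt k)\<^sup>2 * e k \<le> 1 / (\<nu> * (real k + 1)\<^sup>2)" for k
  proof -
    have tb: "1 \<le> tt k" "tt k \<le> real k + 1" using t_bounds[of k] by (auto simp: tt_def)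
    have pw: "(real k + 1) ^ 4 \<le> (real k + 1) powr (4 + \<gamma>)"
    proof -
      have "(real k + 1) powr 4 \<le> (real k + 1) powr (4 + \<gamma>)"
        using gamma by (intro powr_mono) auto
      moreover have "(real k + 1) powr 4 = (real k + 1) ^ 4"
        using powr_realpow[of "real k + 1" 4] by simp
      ultimately show ?thesis by simp
    qed
    have "(tt k)\<^sup>2 \<le> (real k + 1)\<^sup>2" using tb by (intro power_mono) auto
    have "(tt k)\<^sup>2 * e k = (tt k)\<^sup>2 / (\<nu> * (real k + 1) powr (4 + \<gamma>))" by (simp add: e_def)
    also have "\<dots> \<le> (real k + 1)\<^sup>2 / (\<nu> * (real k + 1) ^ 4)"
      using \<open>(tt k)\<^sup>2 \<le> (real k + 1)\<^sup>2\<close> pw nu0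
      by (intro frac_le mult_left_mono) auto
    also have "\<dots> = 1 / (\<nu> * (real k + 1)\<^sup>2)"
    proof -
      have x: "(real k + 1) ^ 4 = (real k + 1)\<^sup>2 * (real k + 1)\<^sup>2" by (simp flip: power_add)
      define y where "y = (real k + 1)\<^sup>2"
      have y0: "y > 0" by (simp add: y_def)
      have "y / (\<nu> * (y * y)) = 1 / (\<nu> * y)" using y0 nu0 by simp
      then show ?thesis unfolding x y_def[symmetric] .
    qed
    finally show ?thesis .
  qed
  define K where "K = (1/(2*\<nu>)) * (\<Sum>j=1..N. (norm (\<xi>s j))\<^sup>2) + 2 / \<nu>"
  have K0: "K \<ge> 0" using nu0 by (simp add: K_def sum_nonneg)
  have Vsum: "V n \<le> (1/(2*\<nu>)) * (\<Sum>j=1..N. (norm (\<xi>s j))\<^sup>2) + (\<Sum>k<n. 1 / (\<nu> * (real k + 1)\<^sup>2))" for n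
  proof (induction n)
    case 0
    then show ?case using V0 by simp
  next
    case (Suc n)
    then show ?case using Vstep[of n] termb[of n] by simp
  qed
  have Vb: "V n \<le> K" for n
  proof -
    have "(\<Sum>k<n. 1 / (\<nu> * (real k + 1)\<^sup>2)) = (1/\<nu>) * (\<Sum>k<n. 1 / (real k + 1)\<^sup>2)"
      by (simp add: sum_distrib_left)
    also have "\<dots> \<le> (1/\<nu>) * 2"
    proof -
      have "2 / (real n + 1) \<ge> 0" by simp
      then have "(\<Sum>k<n. 1 / (real k + 1)\<^sup>2) \<le> 2" using inv_sq_sum[of n] by linarith
      then show ?thesis using nu0 by (intro mult_left_mono) auto
    qed
    finally show ?thesis using Vsum[of n] by (simp add: K_def)
  qed
  have lowb: "(real N * \<nu> / 2) * (norm (\<theta> (Suc m) - \<theta>s))\<^sup>2 \<le> P (Suc m) + e m - \<Phi>" for m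
  proof -
    define A where "A = S (\<xi> (Suc m))"
    define B where "B = S \<xi>s"
    define c where "c = real N * \<nu>"
    have c0: "c > 0" using Npos nu0 by (simp add: c_def)
    have ths: "\<theta>s = - (1/c) *\<^sub>R B" using Sxs c0 Npos nu0 by (simp add: B_def c_def)
    have thM: "\<theta> (Suc m) = - (1/c) *\<^sub>R A" using th_xi[of "Suc m"] by (simp add: A_def c_def)
    have s1: "(\<Sum>j=1..N. inner (\<xi> (Suc m) j) \<theta>s - g j \<theta>s) \<le> (\<Sum>j=1..N. a (Suc m) j + e m / real N)"
      by (rule sum_mono) (rule eopt)
    have s1': "(\<Sum>j=1..N. a (Suc m) j + e m / real N) = (\<Sum>j=1..N. a (Suc m) j) + e m"
      using Npos by (simp add: sum.distrib)
    have s2: "(\<Sum>j=1..N. inner (\<xi> (Suc m) j) \<theta>s - g j \<theta>s) = inner A \<theta>s - (\<Sum>j=1..N. g j \<theta>s)"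
      by (simp add: A_def S_def sum_subtractf inner_sum_left)
    have s3: "\<Phi> = inner B \<theta>s - (\<Sum>j=1..N. g j \<theta>s) + (norm B)\<^sup>2 / (2 * c)"
      by (simp add: \<Phi>_def cs_def B_def S_def sum_subtractf inner_sum_left h_def c_def)
    have s4: "P (Suc m) = (\<Sum>j=1..N. a (Suc m) j) + (norm A)\<^sup>2 / (2 * c)"
      by (simp add: P_def h_def A_def c_def)
    have ge: "inner (A - B) \<theta>s + ((norm A)\<^sup>2 - (norm B)\<^sup>2) / (2 * c) \<le> P (Suc m) + e m - \<Phi>"
      using s1 s1' s2 s3 s4 by (simp add: inner_diff_left diff_divide_distrib)
    have id1: "(norm A)\<^sup>2 - (norm B)\<^sup>2 - 2 * inner (A - B) B = (norm (A - B))\<^sup>2"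
      unfolding power2_norm_eq_inner by (simp add: inner_diff_left inner_diff_right inner_commute)
    have id2: "inner (A - B) \<theta>s = - (1/c) * inner (A - B) B" by (simp add: ths)
    have id3: "(norm (\<theta> (Suc m) - \<theta>s))\<^sup>2 = (1/c)\<^sup>2 * (norm (A - B))\<^sup>2"
    proof -
      have "\<theta> (Suc m) - \<theta>s = - (1/c) *\<^sub>R (A - B)" by (simp add: thM ths algebra_simps)
      then show ?thesis using c0 by (simp add: power_divide)
    qed
    have "inner (A - B) \<theta>s + ((norm A)\<^sup>2 - (norm B)\<^sup>2) / (2 * c) = (norm (A - B))\<^sup>2 / (2 * c)"
      using id1 id2 c0 by (simp add: field_simps)
    also have "\<dots> = (c / 2) * (norm (\<theta> (Suc m) - \<theta>s))\<^sup>2"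
    proof -
      have "(c / 2) * ((1/c)\<^sup>2 * (norm (A - B))\<^sup>2) = (c * (1/c)) * (1/c) * (norm (A - B))\<^sup>2 / 2"
        by (simp add: power2_eq_square)
      also have "\<dots> = (norm (A - B))\<^sup>2 / (2 * c)" using c0 by simp
      finally show ?thesis unfolding id3 by simp
    qed
    finally have E: "inner (A - B) \<theta>s + ((norm A)\<^sup>2 - (norm B)\<^sup>2) / (2 * c) = (c / 2) * (norm (\<theta> (Suc m) - \<theta>s))\<^sup>2" .
    show ?thesis unfolding c_def[symmetric] using ge E by linarith
  qed
  define C where "C = (2 / (real N * \<nu>)) * (4 * K + 1 / \<nu>)"
  have C0: "C > 0" using K0 nu0 Npos by (simp add: C_def add_nonneg_pos)
  have bound: "(norm (\<theta> n - \<theta>s))\<^sup>2 \<le> C / (real n)\<^sup>2" if n: "n \<ge> 1" for n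
  proof -
    obtain m where m: "n = Suc m" using n by (cases n) auto
    have tb: "(real m + 2) / 2 \<le> tt m" using t_bounds[of m] by (simp add: tt_def)
    have "(real m + 2) / 2 > 0" by simp
    then have tpos: "tt m > 0" using tb by linarith
    have Uge: "U m \<ge> 0" by (simp add: U_def sum_nonneg)
    have "(tt m)\<^sup>2 * (P (Suc m) - \<Phi>) \<le> K"
    proof -
      have "(1/(2*\<nu>)) * U m \<ge> 0" using Uge nu0 by simp
      then show ?thesis using Vb[of m] unfolding V_def by linarith
    qed
    then have up1: "P (Suc m) - \<Phi> \<le> K / (tt m)\<^sup>2" using tpos by (simp add: pos_le_divide_eq mult.commute)
    have "(real m + 1)\<^sup>2 / 4 \<le> (tt m)\<^sup>2"
    proof -
      have "(real m + 1) / 2 \<le> tt m" using tb by simp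
      then have "((real m + 1) / 2)\<^sup>2 \<le> (tt m)\<^sup>2" by (intro power_mono) auto
      then show ?thesis by (simp add: power_divide)
    qed
    then have "K / (tt m)\<^sup>2 \<le> K / ((real m + 1)\<^sup>2 / 4)"
      using K0 tpos by (intro divide_left_mono) (auto simp: add_pos_nonneg)
    then have up2: "P (Suc m) - \<Phi> \<le> 4 * K / (real m + 1)\<^sup>2" using up1 by (simp add: mult.commute)
    have up3: "e m \<le> (1 / \<nu>) / (real m + 1)\<^sup>2"
    proof -
      have t1: "1 \<le> (tt m)\<^sup>2" using t_bounds[of m] by (simp add: tt_def one_le_power)
      have "e m \<ge> 0" using nu0 by (simp add: e_def)
      then have "e m \<le> (tt m)\<^sup>2 * e m" using t1 by (simp add: mult_le_cancel_right1)
      with termb[of m] show ?thesis by simp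
    qed
    have "(real N * \<nu> / 2) * (norm (\<theta> n - \<theta>s))\<^sup>2 \<le> (4 * K + 1 / \<nu>) / (real m + 1)\<^sup>2"
    proof -
      have "(4 * K + 1 / \<nu>) / (real m + 1)\<^sup>2 = 4 * K / (real m + 1)\<^sup>2 + (1 / \<nu>) / (real m + 1)\<^sup>2"
        by (rule add_divide_distrib)
      then show ?thesis using lowb[of m] up2 up3 unfolding m by linarith
    qed
    then have "(2 / (real N * \<nu>)) * ((real N * \<nu> / 2) * (norm (\<theta> n - \<theta>s))\<^sup>2) \<le> (2 / (real N * \<nu>)) * ((4 * K + 1 / \<nu>) / (real m + 1)\<^sup>2)"
      using Npos nu0 by (intro mult_left_mono) auto
    moreover have "(2 / (real N * \<nu>)) * ((real N * \<nu> / 2) * (norm (\<theta> n - \<theta>s))\<^sup>2) = (norm (\<theta> n - \<theta>s))\<^sup>2"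
    proof -
      have one: "(2 / (real N * \<nu>)) * (real N * \<nu> / 2) = 1" using Npos nu0 by simp
      have "(2 / (real N * \<nu>)) * ((real N * \<nu> / 2) * (norm (\<theta> n - \<theta>s))\<^sup>2)
          = ((2 / (real N * \<nu>)) * (real N * \<nu> / 2)) * (norm (\<theta> n - \<theta>s))\<^sup>2"
        by (simp only: mult.assoc)
      then show ?thesis unfolding one by simp
    qed
    ultimately have "(norm (\<theta> n - \<theta>s))\<^sup>2 \<le> (2 / (real N * \<nu>)) * ((4 * K + 1 / \<nu>) / (real m + 1)\<^sup>2)"
      by linarith
    then show ?thesis using m by (simp add: C_def add.commute)
  qed
  have conv: "\<theta> \<longlonglongrightarrow> \<theta>s"
  proof -
    have ev: "\<forall>n\<ge>1. norm (\<theta> n - \<theta>s) \<le> sqrt C / real n"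
    proof (intro allI impI)
      fix n :: nat assume n: "n \<ge> 1"
      have "norm (\<theta> n - \<theta>s) = sqrt ((norm (\<theta> n - \<theta>s))\<^sup>2)" by simp
      also have "\<dots> \<le> sqrt (C / (real n)\<^sup>2)" using bound[OF n] by (rule real_sqrt_le_mono)
      also have "\<dots> = sqrt C / real n" by (simp add: real_sqrt_divide)
      finally show "norm (\<theta> n - \<theta>s) \<le> sqrt C / real n" .
    qed
    have "(\<lambda>n. \<theta> n - \<theta>s) \<longlonglongrightarrow> 0"
    proof (rule Lim_null_comparison)
      show "\<forall>\<^sub>F n in sequentially. norm (\<theta> n - \<theta>s) \<le> sqrt C / real n"
        using ev eventually_sequentially by blast
      show "(\<lambda>n. sqrt C / real n) \<longlonglongrightarrow> 0" by (rule lim_const_over_n)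
    qed
    then show ?thesis using Lim_null[of \<theta> \<theta>s sequentially] by blast
  qed
  show ?thesis using conv bound C0 by blast
qed

end
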